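(* Let $A$ be a connected monounary algebra containing no cycle. If $A\not\cong Z$ and $A^{(\infty)}=A$, then $\mathbf V(A)=\mathbf V(E)$.
   Context: A monounary algebra is a pair $(A,f)$ with $A$ a nonempty set and $f:A\to A$; direct products are coordinatewise. It is connected if for all $x,y$ there are $m,n\ge0$ with $f^m(x)=f^n(y)$; it contains a cycle if $f^k(x)=x$ for some $x\in A$, $k\ge1$. A retract of $A$ is a nonempty subalgebra $M$ such that there is an endomorphism $h:A\to M$ with $h|_M=\mathrm{id}$. A retract variety is a class closed under isomorphisms, retracts and direct products; $\mathbf V(\mathcal K)$ is the smallest retract variety containing $\mathcal K$. $A^{(\infty)}$ is the set of $x\in A$ admitting a sequence $x_0=x,x_1,\dots$ in $A$ with $f(x_n)=x_{n-1}$ for all $n\ge1$. $Z=(\mathbb Z,k\mapsto k+1)$; $E$ has universe $\mathbb Z\cup\{(k,1):k\in\mathbb N\}$ with $f(k)=k+1$ on $\mathbb Z$, $f((k,1))=(k-1,1)$ for $k>1$ and $f((1,1))=0$. *)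

theory Defs
  imports "HOL-Library.FuncSet"
begin

definition mu_alg :: "'a set \<Rightarrow> ('a \<Rightarrow> 'a) \<Rightarrow> bool" where
  "mu_alg S f \<longleftrightarrow> S \<noteq> {} \<and> f ` S \<subseteq> S"

definition mu_hom :: "'a set \<Rightarrow> ('a \<Rightarrow> 'a) \<Rightarrow> 'b set \<Rightarrow> ('b \<Rightarrow> 'b) \<Rightarrow> ('a \<Rightarrow> 'b) \<Rightarrow> bool" where
  "mu_hom S f T g h \<longleftrightarrow> h ` S \<subseteq> T \<and> (\<forall>x\<in>S. h (f x) = g (h x))"

definition mu_iso :: "'a set \<Rightarrow> ('a \<Rightarrow> 'a) \<Rightarrow> 'b set \<Rightarrow> ('b \<Rightarrow> 'b) \<Rightarrow> bool" where
  "mu_iso S f T g \<longleftrightarrow> (\<exists>h. mu_hom S f T g h \<and> bij_betw h S T)"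

definition mu_retract :: "'a set \<Rightarrow> ('a \<Rightarrow> 'a) \<Rightarrow> 'a set \<Rightarrow> bool" where
  "mu_retract S f M \<longleftrightarrow> M \<noteq> {} \<and> M \<subseteq> S \<and> f ` M \<subseteq> M \<and>
     (\<exists>h. mu_hom S f M f h \<and> (\<forall>x\<in>M. h x = x))"

definition pow_carrier :: "'i set \<Rightarrow> 'a set \<Rightarrow> ('i \<Rightarrow> 'a) set" where
  "pow_carrier I S = PiE I (\<lambda>_. S)"

definition pow_op :: "'i set \<Rightarrow> ('a \<Rightarrow> 'a) \<Rightarrow> ('i \<Rightarrow> 'a) \<Rightarrow> ('i \<Rightarrow> 'a)" where
  "pow_op I f = (\<lambda>x. restrict (\<lambda>i. f (x i)) I)"

text \<open>Membership of (T,g) in the retract variety generated by (S,f):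
  (T,g) is isomorphic to a retract of a direct power of (S,f).  Index sets are taken
  in a type large enough for both algebras.\<close>
definition in_RV :: "'a set \<Rightarrow> ('a \<Rightarrow> 'a) \<Rightarrow> 'b set \<Rightarrow> ('b \<Rightarrow> 'b) \<Rightarrow> bool" where
  "in_RV S f T g \<longleftrightarrow> (\<exists>(I :: ('a + 'b) set) M.
      mu_retract (pow_carrier I S) (pow_op I f) M \<and> mu_iso T g M (pow_op I f))"

text \<open>V(A) = V(B) iff each lies in the retract variety generated by the other.\<close>
definition same_RV :: "'a set \<Rightarrow> ('a \<Rightarrow> 'a) \<Rightarrow> 'b set \<Rightarrow> ('b \<Rightarrow> 'b) \<Rightarrow> bool" where
  "same_RV S f T g \<longleftrightarrow> in_RV S f T g \<and> in_RV T g S f"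

definition connected_alg :: "'a set \<Rightarrow> ('a \<Rightarrow> 'a) \<Rightarrow> bool" where
  "connected_alg S f \<longleftrightarrow> (\<forall>x\<in>S. \<forall>y\<in>S. \<exists>m n. (f ^^ m) x = (f ^^ n) y)"

definition has_cycle :: "'a set \<Rightarrow> ('a \<Rightarrow> 'a) \<Rightarrow> bool" where
  "has_cycle S f \<longleftrightarrow> (\<exists>x\<in>S. \<exists>k::nat. k \<ge> 1 \<and> (f ^^ k) x = x)"

definition inf_part :: "'a set \<Rightarrow> ('a \<Rightarrow> 'a) \<Rightarrow> 'a set" where
  "inf_part S f = {x \<in> S. \<exists>s::nat \<Rightarrow> 'a. s 0 = x \<and> (\<forall>n. s n \<in> S) \<and> (\<forall>n\<ge>1. f (s n) = s (n - 1))}"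

definition Z_op :: "int \<Rightarrow> int" where "Z_op k = k + 1"

text \<open>E: Inl k encodes k \<in> \<int>; Inr n (n \<ge> 1) encodes (n,1).\<close>
definition E_carrier :: "(int + nat) set" where
  "E_carrier = range Inl \<union> Inr ` {n. n \<ge> 1}"

fun E_op :: "int + nat \<Rightarrow> int + nat" where
  "E_op (Inl k) = Inl (k + 1)"
| "E_op (Inr n) = (if n > 1 then Inr (n - 1) else Inl 0)"

end

theory Submission
  imports Defs
begin

lemma retract_lemma:
  fixes S :: "'x set" and F :: "'x \<Rightarrow> 'x" and B :: "'x set" and lam :: "'x \<Rightarrow> int"
    and z :: "int \<Rightarrow> 'x"
  assumes BS: "B \<subseteq> S" and FB: "F ` B \<subseteq> B" and Bne: "B \<noteq> {}"
    and pre: "\<forall>b\<in>B. \<exists>c\<in>B. F c = b"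
    and lam: "\<forall>x\<in>S. (\<forall>m. (F^^m) x \<notin> B) \<longrightarrow> lam (F x) = lam x + 1"
    and zB: "\<forall>k. z k \<in> B" and zF: "\<forall>k. z (k+1) = F (z k)"
  shows "mu_retract S F B"
proof -
  define p where "p b = (SOME c. c \<in> B \<and> F c = b)" for b
  have p: "p b \<in> B \<and> F (p b) = b" if "b \<in> B" for b
  proof -
    from pre that obtain c where "c \<in> B \<and> F c = b" by blast
    then show ?thesis unfolding p_def by (rule someI)
  qed
  have pk: "(p^^k) b \<in> B" if "b \<in> B" for b k
    using that by (induction k) (auto simp: p)
  have sucr: "(F^^Suc m) x = (F^^m) (F x)" for m x
    by (simp only: funpow_Suc_right comp_apply)
  define R where "R x = (\<exists>m. (F^^m) x \<in> B)" for x
  define d where "d x = (LEAST m. (F^^m) x \<in> B)" for x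
  define h where "h x = (if R x then (p^^d x)((F^^d x) x) else z (lam x))" for x
  have hB: "h x \<in> B" for x
  proof (cases "R x")
    case True
    then have "(F^^d x) x \<in> B" unfolding d_def R_def by (rule LeastI_ex)
    then have "(p^^d x)((F^^d x) x) \<in> B" by (rule pk)
    then show ?thesis using True unfolding h_def by simp
  next
    case False
    then show ?thesis unfolding h_def using zB by simp
  qed
  have hid: "h x = x" if "x \<in> B" for x
  proof -
    have x0: "(F^^0) x \<in> B" using that by simp
    then have "d x = 0" unfolding d_def by (rule Least_eq_0)
    moreover have "R x" unfolding R_def using x0 by blast
    ultimately show ?thesis unfolding h_def by simp
  qed
  have hom: "h (F x) = F (h x)" if "x \<in> S" for x
  proof (cases "R x")
    case True
    have dx: "(F^^d x) x \<in> B" using True unfolding d_def R_def by (rule LeastI_ex)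
    show ?thesis
    proof (cases "d x")
      case 0
      then have "x \<in> B" using dx by simp
      then have "F x \<in> B" using FB by blast
      then show ?thesis using hid \<open>x \<in> B\<close> by simp
    next
      case (Suc k)
      have y: "(F^^Suc k) x \<in> B" using dx Suc by simp
      have eq: "(F^^k) (F x) = (F^^Suc k) x" by (rule sucr[symmetric])
      have yk: "(F^^k) (F x) \<in> B" using eq y by simp
      have dF: "d (F x) = k" unfolding d_def
      proof (rule Least_equality)
        show "(F^^k) (F x) \<in> B" by (rule yk)
      next
        fix j assume "(F^^j) (F x) \<in> B"
        then have "(F^^Suc j) x \<in> B" by (simp only: sucr)
        then have "d x \<le> Suc j" unfolding d_def by (rule Least_le)
        then show "k \<le> j" using Suc by simp
      qed
      have r: "R (F x)" unfolding R_def using yk by blast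
      have "h (F x) = (p^^k) ((F^^k) (F x))" using r dF unfolding h_def by simp
      also have "\<dots> = F (p ((p^^k) ((F^^k) (F x))))" using p[OF pk[OF yk]] by simp
      also have "p ((p^^k) ((F^^k) (F x))) = h x" using True Suc eq unfolding h_def by simp
      finally show ?thesis .
    qed
  next
    case False
    have nF: "\<not> R (F x)"
    proof
      assume "R (F x)"
      then obtain m where "(F^^m) (F x) \<in> B" unfolding R_def by blast
      then have "(F^^Suc m) x \<in> B" by (simp only: sucr)
      then show False using False unfolding R_def by blast
    qed
    have "\<forall>m. (F^^m) x \<notin> B" using False unfolding R_def by blast
    then have "lam (F x) = lam x + 1" using lam that by blast
    then show ?thesis using False nF zF unfolding h_def by simp
  qed
  have "mu_hom S F B F h" unfolding mu_hom_def using hB hom by blast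
  then show ?thesis unfolding mu_retract_def using BS FB Bne hid by blast
qed

lemma in_RV_intro:
  fixes S :: "'a set" and T :: "'b set" and I :: "('a+'b) set" and \<phi> :: "'b \<Rightarrow> ('a+'b) \<Rightarrow> 'a"
  assumes "mu_hom T g (pow_carrier I S) (pow_op I f) \<phi>" "inj_on \<phi> T"
    "mu_retract (pow_carrier I S) (pow_op I f) (\<phi> ` T)"
  shows "in_RV S f T g"
proof -
  have "mu_iso T g (\<phi> ` T) (pow_op I f)"
    unfolding mu_iso_def using assms(1,2) by (auto simp: mu_hom_def bij_betw_def)
  then show ?thesis unfolding in_RV_def using assms(3) by blast
qed

lemma no_cyc:
  assumes nc: "\<not> has_cycle UNIV f" and e: "(f^^p) b = (f^^q) b" shows "p = q"
proof -
  have aux: False if "p' < q'" "(f^^p') b = (f^^q') b" for p' q'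
  proof -
    have "(f^^(q'-p')) ((f^^p') b) = (f^^(q'-p'+p')) b" by (simp add: funpow_add)
    also have "\<dots> = (f^^p') b" using that by simp
    finally have "(f^^(q'-p')) ((f^^p') b) = (f^^p') b" .
    moreover have "1 \<le> q'-p'" using that(1) by simp
    ultimately show False using nc unfolding has_cycle_def by blast
  qed
  show ?thesis
  proof (rule linorder_cases[of p q])
    assume "p < q" then show ?thesis using aux e by blast
  next
    assume "q < p" then show ?thesis using aux e[symmetric] by blast
  qed
qed

definition lev :: "('a \<Rightarrow> 'a) \<Rightarrow> 'a \<Rightarrow> 'a \<Rightarrow> int" where
  "lev f b a = (let mn = (SOME mn. (f^^fst mn) a = (f^^snd mn) b) in int (snd mn) - int (fst mn))"

lemma lev_eq:
  assumes nc: "\<not> has_cycle UNIV f" and e: "(f^^m) a = (f^^n) b"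
  shows "lev f b a = int n - int m"
proof -
  define mn where "mn = (SOME mn. (f^^fst mn) a = (f^^snd mn) b)"
  have "(f^^fst mn) a = (f^^snd mn) b" unfolding mn_def
    by (rule someI[of _ "(m,n)"]) (simp add: e)
  have fa: "(f^^(x+y)) z = (f^^x) ((f^^y) z)" for x y z by (simp add: funpow_add)
  have 1: "(f^^(m + fst mn)) a = (f^^(m + snd mn)) b" using fa \<open>(f^^fst mn) a = (f^^snd mn) b\<close> by simp
  have 2: "(f^^(fst mn + m)) a = (f^^(fst mn + n)) b" using fa e by simp
  have "(f^^(fst mn + n)) b = (f^^(m + snd mn)) b" using 1 2 by (simp add: add.commute)
  then have "fst mn + n = m + snd mn" using no_cyc[OF nc] by blast
  then show ?thesis unfolding lev_def mn_def[symmetric] by simp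
qed

lemma lev_step:
  assumes nc: "\<not> has_cycle UNIV f" and conn: "connected_alg UNIV f"
  shows "lev f b (f a) = lev f b a + 1"
proof -
  obtain m n where e: "(f^^m) a = (f^^n) b" using conn unfolding connected_alg_def by blast
  have "(f^^m) (f a) = (f^^Suc m) a" by (simp only: funpow_Suc_right comp_apply)
  also have "\<dots> = f ((f^^m) a)" by simp
  also have "\<dots> = (f^^Suc n) b" using e by simp
  finally have "(f^^m) (f a) = (f^^Suc n) b" .
  then have "lev f b (f a) = int (Suc n) - int m" by (rule lev_eq[OF nc])
  then show ?thesis using lev_eq[OF nc e] by simp
qed

lemma lev_funpow:
  assumes nc: "\<not> has_cycle UNIV f" and conn: "connected_alg UNIV f"
  shows "lev f b ((f^^k) a) = lev f b a + int k"
  by (induction k) (auto simp: lev_step[OF nc conn])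


lemma pow_iter:
  assumes "u \<in> pow_carrier I S"
  shows "(pow_op I f ^^ m) u = restrict (\<lambda>i. (f^^m) (u i)) I"
proof (induction m)
  case 0
  then show ?case using assms by (simp add: pow_carrier_def)
next
  case (Suc m)
  then show ?case by (simp add: pow_op_def restrict_def fun_eq_iff)
qed

fun elev :: "int + nat \<Rightarrow> int" where
  "elev (Inl k) = k"
| "elev (Inr n) = - int n"

lemma E_cases:
  assumes "e \<in> E_carrier"
  obtains k where "e = Inl k" | n where "e = Inr n" "n \<ge> 1"
  using assms unfolding E_carrier_def by auto

lemma E_closed: "e \<in> E_carrier \<Longrightarrow> E_op e \<in> E_carrier"
  by (erule E_cases) (auto simp: E_carrier_def)

lemma elev_step: "e \<in> E_carrier \<Longrightarrow> elev (E_op e) = elev e + 1"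
  by (erule E_cases) auto

lemma E_pre: "e \<in> E_carrier \<Longrightarrow> \<exists>e'\<in>E_carrier. E_op e' = e"
proof (erule E_cases)
  fix k assume "e = Inl k"
  then show ?thesis by (intro bexI[of _ "Inl (k - 1)"]) (auto simp: E_carrier_def)
next
  fix n assume "e = Inr n" "n \<ge> 1"
  then show ?thesis by (intro bexI[of _ "Inr (n + 1)"]) (auto simp: E_carrier_def)
qed


theorem lemma4p1:
  fixes f :: "'a \<Rightarrow> 'a"
  assumes "connected_alg UNIV f"
    and "\<not> has_cycle UNIV f"
    and "\<not> mu_iso (UNIV :: 'a set) f (UNIV :: int set) Z_op"
    and "inf_part UNIV f = UNIV"
  shows "same_RV (UNIV :: 'a set) f E_carrier E_op"
proof -
  note conn = assms(1) and nc = assms(2) and niso = assms(3) and inf = assms(4)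
  have surj: "\<exists>b. f b = a" for a
  proof -
    have "a \<in> inf_part UNIV f" using inf by simp
    then have "\<exists>s::nat \<Rightarrow> 'a. s 0 = a \<and> (\<forall>n\<ge>1. f (s n) = s (n - 1))"
      unfolding inf_part_def by blast
    then obtain s :: "nat \<Rightarrow> 'a" where s: "s 0 = a" "\<forall>n\<ge>1. f (s n) = s (n - 1)" by blast
    then have "f (s 1) = s (1 - 1)" by blast
    then show ?thesis using s(1) by auto
  qed
  define p where "p a = (SOME b. f b = a)" for a
  have fp: "f (p a) = a" for a
  proof -
    obtain b where "f b = a" using surj by blast
    then show ?thesis unfolding p_def by (rule someI)
  qed
  have sucr: "(f^^Suc m) z = (f^^m) (f z)" for m z
    by (simp only: funpow_Suc_right comp_apply)
  have fpk: "(f^^k) ((p^^k) a) = a" for k a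
  proof (induction k)
    case (Suc k)
    have pe: "(p^^Suc k) a = p ((p^^k) a)" by simp
    have "(f^^Suc k) ((p^^Suc k) a) = (f^^k) (f (p ((p^^k) a)))"
      using pe sucr[of k "p ((p^^k) a)"] by (simp only:)
    then show ?case using Suc fp by simp
  qed simp
  define a0 where "a0 = (undefined :: 'a)"
  define Lv where "Lv = lev f a0"
  have Lv_f: "Lv (f a) = Lv a + 1" for a unfolding Lv_def by (rule lev_step[OF nc conn])
  have Lv_k: "Lv ((f^^k) a) = Lv a + int k" for k a unfolding Lv_def by (rule lev_funpow[OF nc conn])
  have Lv0: "Lv a0 = 0" unfolding Lv_def using lev_eq[OF nc, of 0 a0 0 a0] by simp
  define zA where "zA k = (if k \<ge> 0 then (f^^nat k) a0 else (p^^nat(-k)) a0)" for k :: int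
  have zA: "f (zA k) = zA (k+1)" for k
  proof (cases "k \<ge> 0")
    case True
    then have "nat (k+1) = Suc (nat k)" by simp
    then show ?thesis using True by (simp add: zA_def)
  next
    case False
    show ?thesis
    proof (cases "k = -1")
      case True
      then show ?thesis by (simp add: zA_def fp)
    next
      case False
      with \<open>\<not> k \<ge> 0\<close> have "nat (-k) = Suc (nat (-(k+1)))" "\<not> k + 1 \<ge> 0" by auto
      then show ?thesis using \<open>\<not> k \<ge> 0\<close> by (simp add: zA_def fp)
    qed
  qed
  have LzA: "Lv (zA k) = k" for k
  proof (cases "k \<ge> 0")
    case True
    then show ?thesis by (simp add: zA_def Lv_k Lv0)
  next
    case False
    have "Lv ((f^^nat(-k)) (zA k)) = Lv (zA k) + int (nat (-k))" by (rule Lv_k)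
    moreover have "(f^^nat(-k)) (zA k) = a0" using False by (simp add: zA_def fpk)
    ultimately show ?thesis using False Lv0 by simp
  qed
  have "\<exists>x y. x \<noteq> y \<and> f x = f y"
  proof (rule ccontr)
    assume "\<not> ?thesis"
    then have inj: "inj f" unfolding inj_def by blast
    have "mu_iso UNIV f UNIV Z_op" unfolding mu_iso_def mu_hom_def
    proof (intro exI conjI)
      show "Lv ` UNIV \<subseteq> UNIV" by simp
      show "\<forall>x\<in>UNIV. Lv (f x) = Z_op (Lv x)" by (simp add: Lv_f Z_op_def)
      show "bij_betw Lv UNIV UNIV" unfolding bij_betw_def
      proof
        show "inj Lv"
        proof (rule injI)
          fix a a' assume eq: "Lv a = Lv a'"
          obtain m n where e: "(f^^m) a = (f^^n) a0" using conn unfolding connected_alg_def by blast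
          obtain m' n' where e': "(f^^m') a' = (f^^n') a0" using conn unfolding connected_alg_def by blast
          have L1: "Lv a = int n - int m" unfolding Lv_def by (rule lev_eq[OF nc e])
          have L2: "Lv a' = int n' - int m'" unfolding Lv_def by (rule lev_eq[OF nc e'])
          have E1: "(f^^(m'+m)) a = (f^^(m'+n)) a0" using e by (simp add: funpow_add)
          have E2: "(f^^(m+m')) a' = (f^^(m+n')) a0" using e' by (simp add: funpow_add)
          have "m'+n = m+n'" using L1 L2 eq by linarith
          then have "(f^^(m'+m)) a = (f^^(m'+m)) a'" using E1 E2 by (simp add: add.commute)
          then show "a = a'" using inj_fn[OF inj, of "m'+m"] unfolding inj_def by blast
        qed
        show "range Lv = UNIV" by (rule surjI[of Lv zA]) (rule LzA)
      qed
    qed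
    with niso show False by simp
  qed
  then obtain x y where xy: "x \<noteq> y" "f x = f y" by blast
  define c where "c = f x"
  define \<psi> where "\<psi> e = (case e of Inl k \<Rightarrow> if k \<ge> 0 then (f^^nat k) c else (p^^nat(-k-1)) x
      | Inr n \<Rightarrow> (p^^(n-1)) y)" for e :: "int + nat"
  have \<psi>hom: "\<psi> (E_op e) = f (\<psi> e)" if "e \<in> E_carrier" for e
    using that
  proof (cases rule: E_cases)
    case (1 k)
    show ?thesis
    proof (cases "k \<ge> 0")
      case True
      then have "nat (k+1) = Suc (nat k)" by simp
      then show ?thesis using True 1 by (simp add: \<psi>_def)
    next
      case False
      show ?thesis
      proof (cases "k = -1")
        case True
        then show ?thesis using 1 by (simp add: \<psi>_def c_def fp)
      next
        case False
        with \<open>\<not> k \<ge> 0\<close> have "nat (-k-1) = Suc (nat (-(k+1)-1))" "\<not> k + 1 \<ge> 0" by arith+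
        then show ?thesis using \<open>\<not> k \<ge> 0\<close> 1 by (simp add: \<psi>_def fp)
      qed
    qed
  next
    case (2 n)
    show ?thesis
    proof (cases "n = 1")
      case True
      then show ?thesis using 2 by (simp add: \<psi>_def c_def xy fp)
    next
      case False
      then have "n - 1 = Suc (n - 2)" using 2 by simp
      then show ?thesis using 2 False by (simp add: \<psi>_def fp)
    qed
  qed
  have \<psi>lev: "lev f c (\<psi> e) = elev e" if "e \<in> E_carrier" for e
    using that
  proof (cases rule: E_cases)
    case (1 k)
    show ?thesis
    proof (cases "k \<ge> 0")
      case True
      have "(f^^0) (\<psi> e) = (f^^nat k) c" using True 1 by (simp add: \<psi>_def)
      from lev_eq[OF nc this] show ?thesis using True 1 by simp
    next
      case False
      have "(f^^Suc (nat (-k-1))) (\<psi> e) = (f^^0) c" using False 1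
        by (simp add: \<psi>_def c_def fpk)
      from lev_eq[OF nc this] show ?thesis using False 1 by simp
    qed
  next
    case (2 n)
    then have "n = Suc (n - 1)" by simp
    have pe: "\<psi> e = (p^^(n-1)) y" using 2 by (simp add: \<psi>_def)
    have "(f^^Suc (n-1)) ((p^^(n-1)) y) = f ((f^^(n-1)) ((p^^(n-1)) y))" by simp
    also have "\<dots> = c" using fpk xy(2) by (simp add: c_def)
    finally have "(f^^n) (\<psi> e) = (f^^0) c" using pe \<open>n = Suc (n - 1)\<close> by simp
    from lev_eq[OF nc this] show ?thesis using 2 by simp
  qed
  have \<psi>inj: "inj_on \<psi> E_carrier"
  proof (rule inj_onI)
    fix e e' assume e: "e \<in> E_carrier" and e': "e' \<in> E_carrier" and eq: "\<psi> e = \<psi> e'"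
    have le: "elev e = elev e'" using \<psi>lev[OF e] \<psi>lev[OF e'] eq by simp
    have mixed: False if "k = - int n" "n \<ge> 1" "\<psi> (Inl k) = \<psi> (Inr n)" for k n
    proof -
      have "(p^^(n-1)) x = (p^^(n-1)) y" using that by (simp add: \<psi>_def nat_diff_distrib')
      then have "(f^^(n-1)) ((p^^(n-1)) x) = (f^^(n-1)) ((p^^(n-1)) y)" by simp
      then show False using fpk xy(1) by simp
    qed
    have mixed2: False if "k = - int n" "n \<ge> 1" "\<psi> (Inr n) = \<psi> (Inl k)" for k n
      using mixed[OF that(1,2) that(3)[symmetric]] .
    show "e = e'"
      using e e' le eq mixed mixed2
      by (cases e; cases e') (auto simp: E_carrier_def)
  qed
  define I1 :: "('a + (int+nat)) set" where "I1 = {Inl c}"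
  define \<phi>1 where "\<phi>1 e = restrict (\<lambda>_. \<psi> e) I1" for e
  have \<phi>1hom: "pow_op I1 f (\<phi>1 e) = \<phi>1 (E_op e)" if "e \<in> E_carrier" for e
    using \<psi>hom[OF that] by (simp add: pow_op_def \<phi>1_def restrict_def fun_eq_iff)
  have \<phi>1S: "\<phi>1 e \<in> pow_carrier I1 UNIV" for e by (simp add: pow_carrier_def \<phi>1_def)
  have RV1: "in_RV UNIV f E_carrier E_op"
  proof (rule in_RV_intro[where \<phi>=\<phi>1 and I=I1])
    show "mu_hom E_carrier E_op (pow_carrier I1 UNIV) (pow_op I1 f) \<phi>1"
      unfolding mu_hom_def using \<phi>1hom \<phi>1S by auto
    show "inj_on \<phi>1 E_carrier"
    proof (rule inj_onI)
      fix e e' assume a: "e \<in> E_carrier" "e' \<in> E_carrier" and eq: "\<phi>1 e = \<phi>1 e'"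
      have "\<phi>1 e (Inl c) = \<phi>1 e' (Inl c)" using eq by simp
      then have "\<psi> e = \<psi> e'" by (simp add: \<phi>1_def I1_def)
      then show "e = e'" using \<psi>inj a by (simp add: inj_on_def)
    qed
    show "mu_retract (pow_carrier I1 UNIV) (pow_op I1 f) (\<phi>1 ` E_carrier)"
    proof (rule retract_lemma[where lam="\<lambda>_. 0" and z="\<lambda>k. \<phi>1 (Inl k)"])
      show "\<phi>1 ` E_carrier \<subseteq> pow_carrier I1 UNIV" using \<phi>1S by auto
      show "pow_op I1 f ` \<phi>1 ` E_carrier \<subseteq> \<phi>1 ` E_carrier" using \<phi>1hom E_closed by auto
      show "\<phi>1 ` E_carrier \<noteq> {}" by (auto simp: E_carrier_def)
      show "\<forall>b\<in>\<phi>1 ` E_carrier. \<exists>c\<in>\<phi>1 ` E_carrier. pow_op I1 f c = b"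
      proof
        fix b assume "b \<in> \<phi>1 ` E_carrier"
        then obtain e where e: "e \<in> E_carrier" "b = \<phi>1 e" by blast
        then obtain e' where e': "e' \<in> E_carrier" "E_op e' = e" using E_pre by blast
        show "\<exists>c\<in>\<phi>1 ` E_carrier. pow_op I1 f c = b"
          using e e' \<phi>1hom[OF e'(1)] by blast
      qed
      show "\<forall>k. \<phi>1 (Inl k) \<in> \<phi>1 ` E_carrier" by (auto simp: E_carrier_def)
      show "\<forall>k. \<phi>1 (Inl (k + 1)) = pow_op I1 f (\<phi>1 (Inl k))"
        using \<phi>1hom by (simp add: E_carrier_def)
      show "\<forall>u\<in>pow_carrier I1 UNIV. (\<forall>m. (pow_op I1 f ^^ m) u \<notin> \<phi>1 ` E_carrier) \<longrightarrow> (0::int) = 0 + 1"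
      proof (intro ballI impI)
        fix u assume u: "u \<in> pow_carrier I1 UNIV" and nr: "\<forall>m. (pow_op I1 f ^^ m) u \<notin> \<phi>1 ` E_carrier"
        obtain m n where e: "(f^^m) (u (Inl c)) = (f^^n) c" using conn unfolding connected_alg_def by blast
        have "(pow_op I1 f ^^ m) u = restrict (\<lambda>i. (f^^m) (u i)) I1" by (rule pow_iter[OF u])
        also have "\<dots> = \<phi>1 (Inl (int n))"
          using e by (simp add: \<phi>1_def \<psi>_def I1_def restrict_def fun_eq_iff)
        finally have "(pow_op I1 f ^^ m) u = \<phi>1 (Inl (int n))" .
        moreover have "Inl (int n) \<in> E_carrier" by (simp add: E_carrier_def)
        ultimately show "(0::int) = 0 + 1" using nr by blast
      qed
    qed
  qed
  define h2 where "h2 b a = (if \<exists>k. (f^^k) a = b then Inr (nat (Lv b - Lv a) + 1)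
      else Inl (Lv a - Lv b - 1))" for b a
  have h2E: "h2 b a \<in> E_carrier" for b a by (simp add: h2_def E_carrier_def)
  have h2hom: "h2 b (f a) = E_op (h2 b a)" for b a
  proof (cases "\<exists>k. (f^^k) a = b")
    case True
    then obtain k where k: "(f^^k) a = b" by blast
    have Lb: "Lv b = Lv a + int k" using Lv_k k by blast
    show ?thesis
    proof (cases k)
      case 0
      then have ab: "a = b" using k by simp
      have "\<not> (\<exists>j. (f^^j) (f a) = b)"
      proof
        assume "\<exists>j. (f^^j) (f a) = b"
        then obtain j where "(f^^j) (f a) = b" by blast
        then have "(f^^Suc j) b = (f^^0) b" using ab by (simp only: sucr funpow_0)
        then show False using no_cyc[OF nc] by blast
      qed
      then show ?thesis using True ab by (simp add: h2_def Lv_f)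
    next
      case (Suc j)
      then have "(f^^j) (f a) = b" using k by (simp only: sucr)
      then have "\<exists>j. (f^^j) (f a) = b" by blast
      moreover have "nat (Lv b - Lv a) + 1 = Suc (Suc j)" using Lb Suc by simp
      moreover have "nat (Lv b - Lv (f a)) + 1 = Suc j" using Lb Suc Lv_f by simp
      ultimately show ?thesis using True by (simp add: h2_def)
    qed
  next
    case False
    then have "\<not> (\<exists>j. (f^^j) (f a) = b)" by (metis sucr)
    then show ?thesis using False by (simp add: h2_def Lv_f)
  qed
  define I2 :: "((int+nat) + 'a) set" where "I2 = range Inr"
  define \<phi>2 where "\<phi>2 a = restrict (\<lambda>i. h2 (projr i) a) I2" for a
  have \<phi>2hom: "pow_op I2 E_op (\<phi>2 a) = \<phi>2 (f a)" for a
    by (simp add: pow_op_def \<phi>2_def restrict_def fun_eq_iff h2hom)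
  have \<phi>2S: "\<phi>2 a \<in> pow_carrier I2 E_carrier" for a
    using h2E by (simp add: pow_carrier_def \<phi>2_def)
  have RV2: "in_RV E_carrier E_op UNIV f"
  proof (rule in_RV_intro[where \<phi>=\<phi>2 and I=I2])
    show "mu_hom UNIV f (pow_carrier I2 E_carrier) (pow_op I2 E_op) \<phi>2"
      unfolding mu_hom_def using \<phi>2hom \<phi>2S by auto
    show "inj_on \<phi>2 UNIV"
    proof (rule inj_onI)
      fix a a' assume "\<phi>2 a = \<phi>2 a'"
      then have "\<phi>2 a (Inr a) = \<phi>2 a' (Inr a)" by simp
      then have eq: "h2 a a = h2 a a'" by (simp add: \<phi>2_def I2_def)
      have "\<exists>k. (f^^k) a = a" by (rule exI[of _ 0]) simp
      then have "h2 a a = Inr 1" by (simp add: h2_def)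
      then have h: "h2 a a' = Inr 1" using eq by simp
      then obtain k where k: "(f^^k) a' = a" by (auto simp: h2_def split: if_splits)
      then have ex: "\<exists>k. (f^^k) a' = a" by blast
      have "h2 a a' = Inr (nat (Lv a - Lv a') + 1)" using ex unfolding h2_def by (rule if_P)
      then have "nat (Lv a - Lv a') = 0" using h by simp
      moreover have "Lv a = Lv a' + int k" using Lv_k k by blast
      ultimately have "k = 0" by simp
      then show "a = a'" using k by simp
    qed
    show "mu_retract (pow_carrier I2 E_carrier) (pow_op I2 E_op) (\<phi>2 ` UNIV)"
    proof (rule retract_lemma[where lam="\<lambda>u. elev (u (Inr a0))" and z="\<lambda>k. \<phi>2 (zA k)"])
      show "\<phi>2 ` UNIV \<subseteq> pow_carrier I2 E_carrier" using \<phi>2S by auto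
      show "pow_op I2 E_op ` \<phi>2 ` UNIV \<subseteq> \<phi>2 ` UNIV" using \<phi>2hom by auto
      show "\<phi>2 ` UNIV \<noteq> {}" by simp
      show "\<forall>b\<in>\<phi>2 ` UNIV. \<exists>c\<in>\<phi>2 ` UNIV. pow_op I2 E_op c = b"
      proof
        fix b assume "b \<in> range \<phi>2"
        then obtain a where "b = \<phi>2 a" by blast
        then show "\<exists>c\<in>range \<phi>2. pow_op I2 E_op c = b" using \<phi>2hom[of "p a"] fp by auto
      qed
      show "\<forall>k. \<phi>2 (zA k) \<in> range \<phi>2" by simp
      show "\<forall>k. \<phi>2 (zA (k + 1)) = pow_op I2 E_op (\<phi>2 (zA k))" using \<phi>2hom zA by simp
      show "\<forall>u\<in>pow_carrier I2 E_carrier. (\<forall>m. (pow_op I2 E_op ^^ m) u \<notin> range \<phi>2) \<longrightarrow>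
          elev (pow_op I2 E_op u (Inr a0)) = elev (u (Inr a0)) + 1"
      proof (intro ballI impI)
        fix u assume u: "u \<in> pow_carrier I2 E_carrier"
        then have "u (Inr a0) \<in> E_carrier" by (auto simp: pow_carrier_def I2_def)
        then show "elev (pow_op I2 E_op u (Inr a0)) = elev (u (Inr a0)) + 1"
          by (simp add: pow_op_def I2_def elev_step)
      qed
    qed
  qed
  show ?thesis unfolding same_RV_def using RV1 RV2 by blast
qed

end
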